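(* Let $a\in\mathbb{C}$, $b\in\mathbb{C}$, $c\in\mathbb{C}\setminus\{0\}$, and let $S_n(x)\sim\left(\left(\frac{e^t-1}{t}\right)^a,\ \frac{t^2e^{bt}}{e^{ct}-1}\right)$. Then for $n\ge1$, $$S_n(x)=\sum_{l=0}^{n-1}\sum_{j=0}^{n-1-l}\frac{\binom{n-1}{l}}{\binom{l+n}{l}}\binom{n-1-l}{j}S_2(l+n,n)\,c^{n+l}(-nb)^j\,B_{n-l-j}^{(a)}(x).$$
   Context: For invertible $g(t)$ (nonzero constant term) and delta series $f(t)$ ($f(0)=0$, nonzero coefficient of $t$), the Sheffer sequence $S_n(x)\sim(g(t),f(t))$ is the unique polynomial sequence with $\sum_{k\ge0}S_k(y)\frac{t^k}{k!}=\frac{1}{g(\bar f(t))}e^{y\bar f(t)}$ for all $y\in\mathbb{C}$, where $\bar f$ is the compositional inverse of $f$. Complex powers of series with constant term $1$ are defined by $h^a=\exp(a\log h)$. The Bernoulli polynomials of order $a$ are defined by $\left(\frac{t}{e^t-1}\right)^a e^{xt}=\sum_{n\ge0}B_n^{(a)}(x)\frac{t^n}{n!}$. The Stirling numbers of the second kind are defined by $(e^t-1)^n=n!\sum_{k\ge n}S_2(k,n)\frac{t^k}{k!}$. *)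

theory Defs
  imports Complex_Main "HOL-Computational_Algebra.Formal_Power_Series"
    "HOL-Computational_Algebra.Polynomial" "HOL-Combinatorics.Stirling"
begin

text \<open>Logarithm of a formal power series with constant term 1:
  log h = ln(1 + (h - 1)), where fps_ln 1 is the series of ln(1+t).\<close>
definition fps_log1 :: "complex fps \<Rightarrow> complex fps" where
  "fps_log1 h = fps_ln 1 oo (h - 1)"

definition fps_cpow :: "complex fps \<Rightarrow> complex \<Rightarrow> complex fps" where
  "fps_cpow h a = fps_exp 1 oo (fps_const a * fps_log1 h)"

text \<open>Sheffer sequence S ~ (g, f): for all y,
  sum_k S_k(y) t^k/k! = 1/g(fbar t) * exp(y fbar t), fbar the compositional inverse of f.\<close>
definition sheffer :: "complex fps \<Rightarrow> complex fps \<Rightarrow> (nat \<Rightarrow> complex poly) \<Rightarrow> bool" where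
  "sheffer g f S \<longleftrightarrow>
     (\<forall>y. Abs_fps (\<lambda>k. poly (S k) y / fact k)
          = inverse (g oo fps_inv f) * (fps_exp y oo fps_inv f))"

definition bernoulli_ord :: "complex \<Rightarrow> nat \<Rightarrow> complex \<Rightarrow> complex" where
  "bernoulli_ord a n x =
     fact n * fps_nth (fps_cpow (fps_X / (fps_exp 1 - 1)) a * fps_exp x) n"

end

theory Submission imports Defs "HOL-Computational_Algebra.Formal_Laurent_Series" begin

lemma fps_to_fls_sum: "fps_to_fls (sum g S) = (\<Sum>k\<in>S. fps_to_fls (g k))"
  by (induction S rule: infinite_finite_induct) auto

lemma res_IF:
  fixes f :: "complex fps"
  assumes "subdegree f = 1" "j \<ge> 1"
  shows "fls_residue (inverse (fps_to_fls f) ^ j * fls_deriv (fps_to_fls f)) = (if j = 1 then 1 else 0)"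
proof -
  define F where "F = fps_to_fls f"
  define IF where "IF = inverse F"
  have "f \<noteq> 0" using assms by auto
  hence F0: "F \<noteq> 0" by (simp add: F_def)
  show ?thesis
  proof (cases "j = 1")
    case True
    then show ?thesis using fls_residue_deriv_times_inverse_eq_subdegree(2)[of F] assms
      by (simp add: F_def fls_subdegree_fls_to_fps)
  next
    case False
    then obtain i where j: "j = Suc (Suc i)" using assms(2)
      by (metis One_nat_def Suc_le_D le_antisym not_less_eq_eq)
    have "fls_deriv (IF ^ Suc i) = of_nat (Suc i) * IF ^ i * (- fls_deriv F * IF\<^sup>2)"
      unfolding fls_deriv_power IF_def fls_inverse_deriv by simp
    also have "\<dots> = - of_nat (Suc i) * (IF ^ j * fls_deriv F)"
      by (simp add: j power2_eq_square algebra_simps)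
    finally have "fls_residue (- of_nat (Suc i) * (IF ^ j * fls_deriv F)) = 0"
      by (metis fls_residue_deriv)
    hence "- of_nat (Suc i) * fls_residue (IF ^ j * fls_deriv F) = 0"
      using fls_residue_of_int_times(1)[of "- int (Suc i)" "IF ^ j * fls_deriv F"] by simp
    hence "of_nat (Suc i) * fls_residue (IF ^ j * fls_deriv F) = 0"
      by (simp only: mult_minus_left neg_equal_0_iff_equal)
    hence "fls_residue (IF ^ j * fls_deriv F) = 0"
      by (metis mult_eq_0_iff of_nat_eq_0_iff Zero_not_Suc)
    then show ?thesis using False by (simp add: IF_def F_def)
  qed
qed

lemma fls_sum_nth': "fls_nth (sum g S) j = (\<Sum>k\<in>S. fls_nth (g k) j)"
  by (induction S rule: infinite_finite_induct) auto

lemma lagrange_pow: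
  fixes K :: "complex fps"
  assumes K0: "K$0 \<noteq> 0" and m: "1 \<le> m" "m \<le> n"
  shows "of_nat n * (fps_inv (fps_X*K) ^ m) $ n = of_nat m * (inverse K ^ n) $ (n - m)"
proof -
  define f where "f = fps_X * K"
  have f0: "f$0 = 0" by (simp add: f_def)
  have f1: "f$1 \<noteq> 0" using K0 by (simp add: f_def)
  have sdf: "subdegree f = 1"
    by (rule subdegreeI) (use f0 f1 in auto)
  define w where "w = fps_inv f"
  define A where "A = w^m"
  have hA: "A oo f = fps_X^m"
    using fps_compose_power[OF f0, of w m] fps_inv[OF f0 f1] by (simp add: A_def w_def)
  define R where "R = fps_shift (n+1) A"
  have decA: "A = (\<Sum>k=0..n. fps_const (A$k) * fps_X^k) + fps_X^(n+1) * R"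
  proof (rule fps_ext)
    fix i
    have s: "(\<Sum>k=0..n. fps_const (A$k) * fps_X^k) $ i = (if i \<le> n then A $ i else 0)"
    proof -
      have "\<And>k. (fps_const (A$k) * fps_X^k) $ i = (if i = k then A$k else 0)" by simp
      hence "(\<Sum>k=0..n. fps_const (A$k) * fps_X^k) $ i = (\<Sum>k=0..n. if i = k then A$k else 0)"
        by (simp only: fps_sum_nth)
      thus ?thesis by (simp add: sum.delta)
    qed
    have t: "(fps_X^(n+1) * R) $ i = (if i \<le> n then 0 else A $ i)"
      by (simp only: fps_X_power_mult_nth R_def fps_shift_nth) auto
    show "A $ i = ((\<Sum>k=0..n. fps_const (A$k) * fps_X^k) + fps_X^(n+1) * R) $ i"
      by (simp only: fps_add_nth s t) auto
  qed
  have "fps_X^m = ((\<Sum>k=0..n. fps_const (A$k) * fps_X^k) oo f) + ((fps_X^(n+1) * R) oo f)"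
    using arg_cong[OF decA, of "\<lambda>z. z oo f"] unfolding hA fps_compose_add_distrib .
  also have "\<dots> = (\<Sum>k=0..n. fps_const (A$k) * f^k) + f^(n+1) * (R oo f)"
    by (simp add: fps_compose_sum_distrib fps_compose_mult_distrib[OF f0] fps_X_power_compose[OF f0] fps_X_fps_compose_startby0[OF f0])
  finally have dec: "fps_X^m = (\<Sum>k=0..n. fps_const (A$k) * f^k) + f^(n+1) * (R oo f)" .
  define F where "F = fps_to_fls f"
  define T where "T = fps_to_fls (R oo f)"
  have decl: "fls_X^m = (\<Sum>k=0..n. fls_const (A$k) * F^k) + F^(n+1) * T"
    using arg_cong[OF dec, of fps_to_fls] unfolding F_def T_def
    by (simp only: fps_to_fls_plus fps_to_fls_sum fls_times_fps_to_fls fps_to_fls_power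
        fps_const_to_fls fps_X_to_fls)
  have der: "of_nat m * fls_X^(m-1) = (\<Sum>k=0..n. fls_const (A$k) * (of_nat k * F^(k-1) * fls_deriv F))
      + (of_nat (n+1) * F^n * fls_deriv F * T + F^(n+1) * fls_deriv T)"
    using arg_cong[OF decl, of fls_deriv]
    by (simp only: fls_deriv_sum fls_deriv_add fls_deriv_mult_const_left fls_deriv_mult
         fls_deriv_power fls_deriv_X_power) (simp add: algebra_simps)
  have Fnz: "F \<noteq> 0" using f1 by (auto simp: F_def)
  define IF where "IF = inverse F"
  have FIF: "F * IF = 1" using Fnz by (simp add: IF_def)
  have FIFn: "F^j * IF^j = 1" for j by (metis FIF power_mult_distrib power_one)
  have "of_nat m * fls_X^(m-1) * IF^n = (\<Sum>k=0..n. fls_const (A$k) * (of_nat k * (F^(k-1) * IF^n) * fls_deriv F))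
      + (of_nat (n+1) * fls_deriv F * T + F * fls_deriv T)"
  proof -
    have "of_nat m * fls_X^(m-1) * IF^n = (\<Sum>k=0..n. fls_const (A$k) * (of_nat k * F^(k-1) * fls_deriv F)) * IF^n
      + (of_nat (n+1) * fls_deriv F * T * (F^n * IF^n) + F * fls_deriv T * (F^n * IF^n))"
      by (subst der) (simp add: algebra_simps)
    also have "\<dots> = (\<Sum>k=0..n. fls_const (A$k) * (of_nat k * (F^(k-1) * IF^n) * fls_deriv F))
      + (of_nat (n+1) * fls_deriv F * T + F * fls_deriv T)"
    proof -
      have "(\<Sum>k=0..n. fls_const (A$k) * (of_nat k * F^(k-1) * fls_deriv F)) * IF^n
          = (\<Sum>k=0..n. fls_const (A$k) * (of_nat k * (F^(k-1) * IF^n) * fls_deriv F))"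
        unfolding sum_distrib_right by (rule sum.cong) (simp_all add: mult_ac)
      thus ?thesis by (simp add: FIFn)
    qed
    finally show ?thesis .
  qed
  hence res: "fls_residue (of_nat m * fls_X^(m-1) * IF^n) =
     (\<Sum>k=0..n. fls_residue (fls_const (A$k) * (of_nat k * (F^(k-1) * IF^n) * fls_deriv F)))
      + fls_residue (of_nat (n+1) * fls_deriv F * T + F * fls_deriv T)"
    by (simp only: fls_residue_def fls_plus_nth fls_sum_nth')
  have r3: "fls_residue (of_nat (n+1) * fls_deriv F * T + F * fls_deriv T) = 0"
    by (simp add: F_def T_def fls_deriv_fps_to_fls fls_of_nat
        flip: fps_const_to_fls fps_of_nat fls_times_fps_to_fls)
  have r2: "fls_residue (fls_const (A$k) * (of_nat k * (F^(k-1) * IF^n) * fls_deriv F))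
      = (if k = n then of_nat n * A$n else 0)" if k: "k \<in> {0..n}" for k
  proof (cases "k = 0")
    case True thus ?thesis using m by simp
  next
    case False
    have "F^(k-1) * IF^n = F^(k-1) * IF^(k-1) * IF^(n+1-k)"
      using False k by (simp flip: power_add mult.assoc) 
    also have "\<dots> = IF^(n+1-k)" by (simp add: FIFn)
    finally have e: "F^(k-1) * IF^n = IF^(n+1-k)" .
    have "fls_residue (IF^(n+1-k) * fls_deriv F) = (if n+1-k = 1 then 1 else 0)"
      unfolding IF_def F_def by (rule res_IF) (use sdf k in auto)
    have eq: "fls_const (A$k) * (of_nat k * (F^(k-1) * IF^n) * fls_deriv F)
        = fls_const (A$k * of_nat k) * (IF^(n+1-k) * fls_deriv F)"
      unfolding e by (simp add: fls_of_nat mult_ac fls_const_mult_const)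
    have "fls_residue (fls_const (A$k) * (of_nat k * (F^(k-1) * IF^n) * fls_deriv F))
        = fls_residue (fls_const (A$k * of_nat k) * (IF^(n+1-k) * fls_deriv F))"
      by (simp only: eq)
    also have "\<dots> = A$k * of_nat k * fls_residue (IF^(n+1-k) * fls_deriv F)"
      by (simp only: fls_residue_def fls_mult_const_nth)
    also have "\<dots> = A$k * of_nat k * (if n+1-k = 1 then 1 else 0)"
      by (simp only: \<open>fls_residue (IF^(n+1-k) * fls_deriv F) = _\<close>)
    also have "\<dots> = (if k = n then of_nat n * A$n else 0)"
      using k False by auto
    finally show ?thesis .
  qed
  have "fls_residue (of_nat m * fls_X^(m-1) * IF^n) = of_nat n * A $ n"
    using res r3 r2 by (simp del: fls_residue_def)
  moreover have "fls_residue (of_nat m * fls_X^(m-1) * IF^n) = of_nat m * (inverse K ^ n) $ (n - m)"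
  proof -
    have "IF = fls_X_inv * fps_to_fls (inverse K)"
      using K0 by (simp add: IF_def F_def f_def fls_times_fps_to_fls fls_inverse_X
          fls_inverse_fps_to_fls subdegree_eq_0_iff)
    hence "IF^n = fls_X_inv^n * fps_to_fls (inverse K ^ n)"
      by (simp add: power_mult_distrib fps_to_fls_power)
    hence "of_nat m * fls_X^(m-1) * IF^n = fls_const (of_nat m) * (fls_X^(m-1) * (fls_X_inv^n * fps_to_fls (inverse K ^ n)))"
      by (simp add: fls_of_nat mult.assoc)
    also have "\<dots> = fls_const (of_nat m) * fls_shift (- int (m-1)) (fls_shift (int n) (fps_to_fls (inverse K ^ n)))"
      by (simp add: fls_X_power_times_conv_shift fls_X_inv_power_times_conv_shift)
    finally show ?thesis using m
      by (simp add: nat_diff_distrib' of_nat_diff)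
  qed
  ultimately show ?thesis by (simp add: A_def w_def f_def)
qed

lemma stirling_fps:
  fixes c :: complex
  shows "((fps_exp c - 1) ^ n) $ k = fact n * c^k * of_nat (Stirling k n) / fact k"
proof (induction n arbitrary: k)
  case 0
  then show ?case by (cases k) auto
next
  case (Suc n)
  define E where "E = fps_exp c - 1"
  note IH = Suc[folded E_def]
  show ?case unfolding E_def[symmetric]
  proof (induction k)
    case 0
    then show ?case by (simp add: E_def)
  next
    case (Suc k)
    have d: "fps_deriv (E ^ Suc n) = fps_const (of_nat (Suc n) * c) * (E ^ Suc n + E ^ n)"
    proof -
      have dE: "fps_deriv E = fps_const c * (E + 1)" by (simp add: E_def)
      show ?thesis
        using fps_deriv_power[of E "Suc n"] unfolding dE diff_Suc_1
        by (simp add: algebra_simps fps_const_add fps_const_mult)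
    qed
    have "of_nat (Suc k) * (E ^ Suc n) $ Suc k = fps_deriv (E ^ Suc n) $ k"
      by (simp only: fps_deriv_nth Suc_eq_plus1)
    also have "\<dots> = of_nat (Suc n) * c * ((E ^ Suc n) $ k + (E ^ n) $ k)"
      by (simp only: d fps_mult_left_const_nth fps_add_nth)
    also have "\<dots> = of_nat (Suc n) * c * (fact (Suc n) * c^k * of_nat (Stirling k (Suc n)) / fact k
        + fact n * c^k * of_nat (Stirling k n) / fact k)"
      by (simp only: Suc.IH IH)
    also have "\<dots> = of_nat (Suc k) * (fact (Suc n) * c ^ Suc k * of_nat (Stirling (Suc k) (Suc n)) / fact (Suc k))"
    proof -
      have aux: "N * c * (N*fn * ck * S1 / fk + fn * ck * S0/fk) = K * (N*fn * (c*ck) * (N*S1 + S0) / (K*fk))"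
        if "K \<noteq> 0" for N K fn fk ck S1 S0 :: complex
      proof -
        have "K * (N*fn * (c*ck) * (N*S1 + S0) / (K*fk)) = N*fn * (c*ck) * (N*S1 + S0) / fk"
          using that by simp
        also have "\<dots> = N * c * (N*fn * ck * S1 / fk + fn * ck * S0/fk)"
          by (simp add: add_divide_distrib algebra_simps)
        finally show ?thesis by simp
      qed
      have "(of_nat (Suc k) :: complex) \<noteq> 0" by (rule of_nat_neq_0)
      from aux[OF this, of "of_nat (Suc n)" "fact n" "c^k" "of_nat (Stirling k (Suc n))" "fact k" "of_nat (Stirling k n)"]
      show ?thesis by (simp only: fact_Suc power_Suc Stirling.simps of_nat_add of_nat_mult)
    qed
    finally show ?case
      by (metis (no_types, lifting) mult_cancel_left of_nat_eq_0_iff nat.distinct(1))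
  qed
qed

lemma log1_0: "fps_log1 h $ 0 = 0"
  by (simp add: fps_log1_def fps_ln_nth)

lemma log1_deriv:
  fixes h :: "complex fps"
  assumes h0: "h$0 = 1"
  shows "fps_deriv (fps_log1 h) = inverse h * fps_deriv h"
proof -
  have z: "(h - 1) $ 0 = 0" using h0 by simp
  have c: "(1 + fps_X) oo (h - 1) = h"
    by (simp add: fps_compose_add_distrib fps_X_fps_compose_startby0[OF z])
  have "fps_deriv (fps_log1 h) = (fps_deriv (fps_ln 1) oo (h - 1)) * fps_deriv (h - 1)"
    unfolding fps_log1_def by (rule fps_compose_deriv[OF z])
  also have "fps_deriv (fps_ln 1) oo (h - 1) = inverse ((1 + fps_X) oo (h - 1))"
    by (simp add: fps_ln_deriv fps_inverse_compose[OF z])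
  finally show ?thesis by (simp add: c)
qed

lemma exp_comp_deriv:
  fixes u :: "complex fps"
  assumes "u$0 = 0"
  shows "fps_deriv (fps_exp 1 oo u) = (fps_exp 1 oo u) * fps_deriv u"
  using fps_compose_deriv[OF assms, of "fps_exp 1"] by simp

lemma cpow_inv:
  fixes h :: "complex fps"
  assumes h0: "h$0 = 1"
  shows "fps_cpow (inverse h) a * fps_cpow h a = 1"
proof -
  define u where "u = fps_const a * fps_log1 h"
  define v where "v = fps_const a * fps_log1 (inverse h)"
  have u0: "u$0 = 0" by (simp add: u_def log1_0)
  have v0: "v$0 = 0" by (simp add: v_def log1_0)
  have ih0: "(inverse h)$0 = 1" using h0 by simp
  have hih: "h * inverse h = 1" using h0 by (simp add: inverse_mult_eq_1')
  have "fps_deriv u + fps_deriv v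
      = fps_const a * (inverse h * fps_deriv h + inverse (inverse h) * fps_deriv (inverse h))"
    by (simp add: u_def v_def log1_deriv[OF h0] log1_deriv[OF ih0] algebra_simps)
  also have "inverse (inverse h) * fps_deriv (inverse h) = - (inverse h * fps_deriv h) * (h * inverse h)"
    using h0 by (simp add: fps_inverse_deriv power2_eq_square algebra_simps)
  finally have uv: "fps_deriv u + fps_deriv v = 0" by (simp add: hih)
  define Z where "Z = (fps_exp 1 oo v) * (fps_exp 1 oo u)"
  have "fps_deriv Z = Z * (fps_deriv u + fps_deriv v)"
    by (simp add: Z_def exp_comp_deriv[OF u0] exp_comp_deriv[OF v0] algebra_simps)
  hence "fps_deriv Z = 0" by (simp add: uv)
  hence "Z = fps_const (Z$0)" by simp
  also have "Z$0 = 1" by (simp add: Z_def)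
  finally show ?thesis by (simp add: Z_def fps_cpow_def u_def v_def)
qed

lemma div_sd1:
  fixes g :: "complex fps"
  assumes "subdegree g = 1"
  shows "f / g = fps_shift 1 (f * inverse (fps_shift 1 g))"
  using assms by (simp add: fps_divide_def)

lemma sd1: "(c::complex) \<noteq> 0 \<Longrightarrow> subdegree (fps_exp c - 1) = 1"
  by (rule subdegreeI) auto

lemma X_div: "fps_X / (fps_exp 1 - 1) = inverse (fps_shift 1 (fps_exp (1::complex) - 1))"
proof -
  have "fps_X / (fps_exp 1 - 1) = fps_shift 1 (fps_X * inverse (fps_shift 1 (fps_exp (1::complex) - 1)))"
    by (rule div_sd1[OF sd1]) simp
  thus ?thesis by (simp only: mult.commute[of fps_X] fps_shift_times_fps_X')
qed

lemma div_X: "(fps_exp 1 - 1) / fps_X = fps_shift 1 (fps_exp (1::complex) - 1)"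
  by (simp add: fps_divide_def fps_X_unit_factor)

lemma f_form:
  fixes b c :: complex
  assumes "c \<noteq> 0"
  shows "fps_X ^ 2 * fps_exp b / (fps_exp c - 1) = fps_X * (fps_exp b * inverse (fps_shift 1 (fps_exp c - 1)))"
proof -
  have "fps_X ^ 2 * fps_exp b * inverse (fps_shift 1 (fps_exp c - 1))
      = (fps_X * (fps_exp b * inverse (fps_shift 1 (fps_exp c - 1)))) * fps_X"
    by (simp add: power2_eq_square mult_ac)
  thus ?thesis by (simp only: div_sd1[OF sd1[OF assms]] fps_shift_times_fps_X')
qed

lemma Cpow_nth:
  fixes c :: complex
  shows "(fps_shift 1 (fps_exp c - 1) ^ n) $ l = fact n * c^(l+n) * of_nat (Stirling (l+n) n) / fact (l+n)"
proof -
  define C where "C = fps_shift 1 (fps_exp c - 1)"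
  have E: "fps_exp c - 1 = C * fps_X"
    by (rule fps_ext) (auto simp: C_def)
  have "(C ^ n) $ l = (C ^ n * fps_X ^ n) $ (l + n)"
    by (simp add: fps_X_power_mult_right_nth)
  also have "C ^ n * fps_X ^ n = (fps_exp c - 1) ^ n" by (simp add: E power_mult_distrib)
  finally show ?thesis by (simp add: C_def stirling_fps)
qed

lemma invK_nth:
  fixes b c :: complex
  assumes "c \<noteq> 0"
  shows "(inverse (fps_exp b * inverse (fps_shift 1 (fps_exp c - 1))) ^ n) $ r
     = (\<Sum>l=0..r. (fact n * c^(l+n) * of_nat (Stirling (l+n) n) / fact (l+n)) * ((- (of_nat n * b))^(r-l) / fact (r-l)))"
proof -
  define C where "C = fps_shift 1 (fps_exp c - 1)"
  have C0: "C $ 0 \<noteq> 0" using assms by (simp add: C_def)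
  have "inverse (fps_exp b * inverse C) = C * fps_exp (- b)"
    using C0 by (simp add: fps_inverse_mult fps_exp_neg mult.commute)
  hence "inverse (fps_exp b * inverse C) ^ n = C ^ n * fps_exp (of_nat n * (- b))"
    by (simp add: power_mult_distrib fps_exp_power_mult)
  thus ?thesis unfolding C_def[symmetric]
    by (simp add: fps_mult_nth Cpow_nth[of c n, folded C_def] power_mult_distrib)
qed

lemma coef_aux:
  fixes A Lf M F2 Jf If N I Bi Cc S Y :: complex
  assumes "A \<noteq> 0" "Lf \<noteq> 0" "M \<noteq> 0" "F2 \<noteq> 0" "Jf \<noteq> 0" "If \<noteq> 0" "N \<noteq> 0" "I \<noteq> 0"
  shows "(A/(Lf*M)) / (F2/(Lf*(N*A))) * (M/(Jf*If)) * S * Cc * Y * Bi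
       = (N*A) * (Bi/(I*If)) * (I/N) * (((N*A) * Cc * S / F2) * (Y / Jf))"
  using assms by (simp add: field_simps)

lemma coef_eq:
  fixes c y :: complex and B :: "nat \<Rightarrow> complex"
  assumes "1 \<le> i" "l + i \<le> n"
  shows "(of_nat ((n - 1) choose l) / of_nat ((l + n) choose l)) * of_nat ((n - 1 - l) choose (n - l - i))
       * of_nat (Stirling (l + n) n) * c ^ (n + l) * y ^ (n - l - i) * B (n - l - (n - l - i))
     = fact n * (B i / fact i) * (of_nat i / of_nat n) *
       ((fact n * c^(l+n) * of_nat (Stirling (l+n) n) / fact (l+n)) * (y^(n-i-l) / fact (n-i-l)))"
proof -
  obtain i' where i: "i = Suc i'" using assms(1) by (cases i) auto
  define j where "j = n - i - l"
  have n: "n = Suc (l + i' + j)" using assms by (simp add: i j_def)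
  have e1: "of_nat ((n - 1) choose l) = (fact (l+i'+j) / (fact l * fact (i'+j)) :: complex)"
    by (subst binomial_fact) (auto simp: n)
  have e2: "of_nat ((l + n) choose l) = (fact (l+n) / (fact l * fact n) :: complex)"
    by (subst binomial_fact) auto
  have e3: "of_nat ((n - 1 - l) choose j) = (fact (i'+j) / (fact j * fact i') :: complex)"
    by (subst binomial_fact) (auto simp: n i)
  have fn: "(fact n :: complex) = of_nat n * fact (l+i'+j)" by (simp add: n)
  have fi: "(fact i :: complex) = of_nat i * fact i'" by (simp add: i)
  have r: "n - l - (n - l - i) = i" "n - l - i = j" "n - i - l = j" "n - l - j = i" using assms by (auto simp: j_def)
  have cc: "c^(l+n) = c^(n+l)" by (simp add: add.commute)
  have ne: "(fact (l+i'+j)::complex) \<noteq> 0" "(fact l::complex) \<noteq> 0" "(fact (i'+j)::complex) \<noteq> 0"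
     "(fact (l+n)::complex) \<noteq> 0" "(fact j::complex) \<noteq> 0" "(fact i'::complex) \<noteq> 0"
     "(of_nat n::complex) \<noteq> 0" "(of_nat i::complex) \<noteq> 0" using assms by auto
  show ?thesis
    unfolding r unfolding e1 e2 e3 cc fi
    unfolding fn
    by (rule coef_aux[OF ne])
qed

lemma sum_swap_tri:
  fixes g :: "nat \<Rightarrow> nat \<Rightarrow> complex"
  assumes "n \<ge> 1"
  shows "(\<Sum>l=0..n-1. \<Sum>j=0..n-1-l. g l j) = (\<Sum>i=1..n. \<Sum>l=0..n-i. g l (n-l-i))"
proof -
  have "(\<Sum>j=0..n-1-l. g l j) = (\<Sum>i=1..n-l. g l (n-l-i))" if "l \<in> {0..n-1}" for l
    by (rule sum.reindex_bij_witness[where i="\<lambda>j. n-l-j" and j="\<lambda>i. n-l-i"]) (use that assms in auto)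
  hence "(\<Sum>l=0..n-1. \<Sum>j=0..n-1-l. g l j) = (\<Sum>l=0..n-1. \<Sum>i=1..n-l. g l (n-l-i))"
    by (rule sum.cong[OF refl])
  also have "\<dots> = (\<Sum>l=0..n-1. \<Sum>i=1..n. if l + i \<le> n then g l (n-l-i) else 0)"
    by (rule sum.cong[OF refl], subst sum.inter_filter[symmetric]) (auto intro!: sum.cong)
  also have "\<dots> = (\<Sum>i=1..n. \<Sum>l=0..n-1. if l + i \<le> n then g l (n-l-i) else 0)"
    by (rule sum.swap)
  also have "\<dots> = (\<Sum>i=1..n. \<Sum>l=0..n-i. g l (n-l-i))"
    by (rule sum.cong[OF refl], subst sum.inter_filter[symmetric]) (auto intro!: sum.cong)
  finally show ?thesis .
qed

theorem theorem3:
  fixes a b c :: complex and S :: "nat \<Rightarrow> complex poly" and n :: nat and x :: complex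
  assumes "c \<noteq> 0"
    and "sheffer (fps_cpow ((fps_exp 1 - 1) / fps_X) a)
                 (fps_X ^ 2 * fps_exp b / (fps_exp c - 1)) S"
    and "n \<ge> 1"
  shows "poly (S n) x =
    (\<Sum>l = 0..n - 1. \<Sum>j = 0..n - 1 - l.
       (of_nat ((n - 1) choose l) / of_nat ((l + n) choose l))
       * of_nat ((n - 1 - l) choose j) * of_nat (Stirling (l + n) n)
       * c ^ (n + l) * (- (of_nat n * b)) ^ j * bernoulli_ord a (n - l - j) x)"
proof -
  define D where "D = fps_shift 1 (fps_exp (1::complex) - 1)"
  define P where "P = fps_cpow D a"
  define Q where "Q = fps_cpow (inverse D) a"
  define K where "K = fps_exp b * inverse (fps_shift 1 (fps_exp c - 1))"
  define w where "w = fps_inv (fps_X * K)"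
  define T where "T = (\<lambda>i l. (fact n * c^(l+n) * of_nat (Stirling (l+n) n) / fact (l+n))
      * ((- (of_nat n * b))^(n-i-l) / fact (n-i-l)))"
  have D0: "D$0 = 1" by (simp add: D_def)
  have QP: "Q * P = 1" unfolding Q_def P_def by (rule cpow_inv[OF D0])
  have P0: "P $ 0 \<noteq> 0" by (simp add: P_def fps_cpow_def)
  have iP: "inverse P = Q" using QP by (metis fps_inverse_unique mult.commute)
  have w0: "w $ 0 = 0" by (simp add: w_def fps_inv_def)
  have K0: "K $ 0 \<noteq> 0" using assms(1) by (simp add: K_def)
  have sh: "sheffer P (fps_X * K) S"
    using assms(2) by (simp add: P_def D_def K_def div_X f_form[OF assms(1)])
  define H where "H = Q * fps_exp x"
  have gen: "Abs_fps (\<lambda>k. poly (S k) x / fact k) = H oo w"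
  proof -
    have "Abs_fps (\<lambda>k. poly (S k) x / fact k) = inverse (P oo w) * (fps_exp x oo w)"
      using sh unfolding sheffer_def w_def by blast
    also have "inverse (P oo w) = inverse P oo w" by (rule fps_inverse_compose[OF w0 P0, symmetric])
    finally show ?thesis by (simp add: fps_compose_mult_distrib[OF w0] iP H_def)
  qed
  have bern: "bernoulli_ord a i x = fact i * H $ i" for i
    by (simp add: bernoulli_ord_def X_div H_def Q_def D_def)
  have "poly (S n) x / fact n = (H oo w) $ n"
    using arg_cong[OF gen, of "\<lambda>F. F $ n"] by simp
  hence "poly (S n) x = fact n * (\<Sum>i=0..n. H$i * (w^i)$n)"
    by (simp add: fps_compose_nth field_simps)
  also have "(\<Sum>i=0..n. H$i * (w^i)$n) = (\<Sum>i=1..n. H$i * (w^i)$n)"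
    using assms(3) by (simp add: sum.atLeast_Suc_atMost)
  also have "\<dots> = (\<Sum>i=1..n. H$i * (of_nat i / of_nat n * (\<Sum>l=0..n-i. T i l)))"
  proof (rule sum.cong[OF refl])
    fix i assume i: "i \<in> {1..n}"
    have "of_nat n * (w^i)$n = of_nat i * (inverse K ^ n) $ (n - i)"
      unfolding w_def by (rule lagrange_pow[OF K0]) (use i in auto)
    hence "(w^i)$n = of_nat i / of_nat n * (inverse K ^ n) $ (n - i)"
      using assms(3) by (simp add: field_simps)
    also have "(inverse K ^ n) $ (n - i) = (\<Sum>l=0..n-i. T i l)"
      unfolding K_def invK_nth[OF assms(1)] T_def by (rule sum.cong) (auto simp: diff_diff_add add.commute)
    finally show "H$i * (w^i)$n = H$i * (of_nat i / of_nat n * (\<Sum>l=0..n-i. T i l))" by simp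
  qed
  finally have lhs: "poly (S n) x = (\<Sum>i=1..n. \<Sum>l=0..n-i.
      fact n * (bernoulli_ord a i x / fact i) * (of_nat i / of_nat n) * T i l)"
    by (simp add: bern sum_distrib_left mult_ac)
  have "(\<Sum>l = 0..n - 1. \<Sum>j = 0..n - 1 - l.
       (of_nat ((n - 1) choose l) / of_nat ((l + n) choose l))
       * of_nat ((n - 1 - l) choose j) * of_nat (Stirling (l + n) n)
       * c ^ (n + l) * (- (of_nat n * b)) ^ j * bernoulli_ord a (n - l - j) x)
     = (\<Sum>i=1..n. \<Sum>l=0..n-i. (of_nat ((n - 1) choose l) / of_nat ((l + n) choose l))
       * of_nat ((n - 1 - l) choose (n-l-i)) * of_nat (Stirling (l + n) n)
       * c ^ (n + l) * (- (of_nat n * b)) ^ (n-l-i) * bernoulli_ord a (n - l - (n-l-i)) x)"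
    by (rule sum_swap_tri[OF assms(3)])
  also have "\<dots> = (\<Sum>i=1..n. \<Sum>l=0..n-i.
      fact n * (bernoulli_ord a i x / fact i) * (of_nat i / of_nat n) * T i l)"
    unfolding T_def
    by (intro sum.cong refl coef_eq[where B="\<lambda>i. bernoulli_ord a i x"]) auto
  finally show ?thesis using lhs by simp
qed

end
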